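(* Let $A,B,C$ be smooth functions on $[0,1]$ and consider the Abel equation $$\frac{dx}{dt}=A(t)x^3+B(t)x^2+C(t)x,\qquad t\in[0,1].$$ Assume that there exist real numbers $a,b,c$ such that $aA(t)+bB(t)$ is not identically zero and does not change sign on $[0,1]$, and such that $$(bC(t)-cA(t))^2+(aA(t)+bB(t))(cB(t)+aC(t))<0\quad\text{for all } t\in[0,1].$$ Then the equation has at most four non-zero periodic orbits.
   Context: A periodic orbit is a solution $x(t)$ defined on all of $[0,1]$ with $x(0)=x(1)$; $x\equiv0$ is always one, and non-zero periodic orbits are the others. *)

theory Defs
  imports "HOL-Analysis.Analysis"
begin

definition smooth_on_unit :: "(real \<Rightarrow> real) \<Rightarrow> bool" where
  "smooth_on_unit f \<longleftrightarrow> (\<exists>D :: nat \<Rightarrow> real \<Rightarrow> real. D 0 = f \<and>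
     (\<forall>n. \<forall>t\<in>{0..1}. (D n has_real_derivative D (Suc n) t) (at t within {0..1})))"

definition abel_solution :: "(real \<Rightarrow> real) \<Rightarrow> (real \<Rightarrow> real) \<Rightarrow> (real \<Rightarrow> real) \<Rightarrow> (real \<Rightarrow> real) \<Rightarrow> bool" where
  "abel_solution A B C x \<longleftrightarrow>
     (\<forall>t\<in>{0..1}. (x has_real_derivative (A t * (x t)^3 + B t * (x t)^2 + C t * x t)) (at t within {0..1}))"

text \<open>Non-zero periodic orbits, each represented canonically by its restriction to [0,1]
  (extended by 0 outside [0,1]), so that distinct elements are distinct orbits.\<close>
definition nonzero_periodic_orbits :: "(real \<Rightarrow> real) \<Rightarrow> (real \<Rightarrow> real) \<Rightarrow> (real \<Rightarrow> real) \<Rightarrow> (real \<Rightarrow> real) set" where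
  "nonzero_periodic_orbits A B C =
     {x. (\<forall>t. t \<notin> {0..1} \<longrightarrow> x t = 0) \<and> abel_solution A B C x \<and> x 0 = x 1 \<and>
         (\<exists>t\<in>{0..1}. x t \<noteq> 0)}"

end

theory Submission
  imports Defs
begin

lemma mvt_within:
  fixes f f' :: "real \<Rightarrow> real"
  assumes "a < b" "{a..b} \<subseteq> S"
    and d: "\<And>x. x \<in> {a..b} \<Longrightarrow> (f has_real_derivative f' x) (at x within S)"
  shows "\<exists>\<xi>\<in>{a<..<b}. f b - f a = f' \<xi> * (b - a)"
proof -
  have "(f has_derivative (\<lambda>h. f' x * h)) (at x within {a..b})" if "a \<le> x" "x \<le> b" for x
    using has_field_derivative_subset[OF d[of x] assms(2)] that
    by (simp add: has_field_derivative_def)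
  from mvt_simple[OF assms(1), of f "\<lambda>x h. f' x * h", OF this] show ?thesis by auto
qed

lemma const_sign:
  fixes f :: "real \<Rightarrow> real"
  assumes cf: "continuous_on {0..1} f" and nz: "\<forall>t\<in>{0..1}. f t \<noteq> 0"
    and s: "s \<in> {0..1}" and t: "t \<in> {0..1}" and fs: "f s > 0"
  shows "f t > 0"
proof (rule ccontr)
  assume "\<not> f t > 0" then have ft: "f t < 0" using nz t by force
  consider "s \<le> t" | "t \<le> s" by linarith
  then show False
  proof cases
    case 1
    have "continuous_on {s..t} f" using continuous_on_subset[OF cf] s t by auto
    from IVT2'[of f t 0 s, OF _ _ 1 this] ft fs obtain x where "s \<le> x" "x \<le> t" "f x = 0" by auto
    then show False using nz s t by auto
  next
    case 2
    have "continuous_on {t..s} f" using continuous_on_subset[OF cf] s t by auto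
    from IVT'[of f t 0 s, OF _ _ 2 this] ft fs obtain x where "t \<le> x" "x \<le> s" "f x = 0" by auto
    then show False using nz s t by auto
  qed
qed

lemma bound_cont:
  fixes f :: "real \<Rightarrow> real"
  assumes "continuous_on {0..1} f"
  shows "\<exists>M. \<forall>t\<in>{0..1}. \<bar>f t\<bar> \<le> M"
proof -
  have "bounded (f ` {0..1})"
    using compact_continuous_image[OF assms compact_Icc] compact_imp_bounded by blast
  then show ?thesis unfolding bounded_real by auto
qed

lemma smooth_cont:
  assumes "smooth_on_unit f"
  shows "continuous_on {0..1} f"
proof -
  obtain D :: "nat \<Rightarrow> real \<Rightarrow> real" where D0: "D 0 = f"
    and dD: "\<forall>n. \<forall>t\<in>{0..1}. (D n has_real_derivative D (Suc n) t) (at t within {0..1})"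
    using assms unfolding smooth_on_unit_def by blast
  have "continuous_on {0..1} (D 0)"
    by (rule DERIV_continuous_on[of _ _ "D (Suc 0)"]) (use dD in blast)
  then show ?thesis using D0 by simp
qed

lemma sol_deriv:
  assumes "abel_solution A B C x" "t \<in> {0..1}"
  shows "(x has_real_derivative (A t * (x t)^3 + B t * (x t)^2 + C t * x t)) (at t within {0..1})"
  using assms unfolding abel_solution_def by blast

lemma sol_cont:
  assumes "abel_solution A B C x"
  shows "continuous_on {0..1} x"
  by (rule DERIV_continuous_on[of _ _ "\<lambda>t. A t * (x t)^3 + B t * (x t)^2 + C t * x t"])
    (use sol_deriv[OF assms] in blast)

lemma abs3: "\<bar>x + y + z\<bar> \<le> \<bar>x\<bar> + \<bar>y\<bar> + \<bar>z::real\<bar>"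
  by linarith

lemma abel_uniq:
  assumes u: "abel_solution A B C u" and v: "abel_solution A B C v"
    and cA: "continuous_on {0..1} A" and cB: "continuous_on {0..1} B" and cC: "continuous_on {0..1} C"
    and t0: "t0 \<in> {0..1}" and eq: "u t0 = v t0"
  shows "\<forall>t\<in>{0..1}. u t = v t"
proof -
  obtain M1 where M1: "\<forall>t\<in>{0..1}. \<bar>u t\<bar> \<le> M1" using bound_cont[OF sol_cont[OF u]] by blast
  obtain M2 where M2: "\<forall>t\<in>{0..1}. \<bar>v t\<bar> \<le> M2" using bound_cont[OF sol_cont[OF v]] by blast
  obtain M3 where M3: "\<forall>t\<in>{0..1}. \<bar>A t\<bar> \<le> M3" using bound_cont[OF cA] by blast
  obtain M4 where M4: "\<forall>t\<in>{0..1}. \<bar>B t\<bar> \<le> M4" using bound_cont[OF cB] by blast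
  obtain M5 where M5: "\<forall>t\<in>{0..1}. \<bar>C t\<bar> \<le> M5" using bound_cont[OF cC] by blast
  define M where "M = \<bar>M1\<bar> + \<bar>M2\<bar> + \<bar>M3\<bar> + \<bar>M4\<bar> + \<bar>M5\<bar>"
  have M0: "M \<ge> 0" unfolding M_def by simp
  have bu: "\<bar>u t\<bar> \<le> M" and bv: "\<bar>v t\<bar> \<le> M" and bA: "\<bar>A t\<bar> \<le> M"
    and bB: "\<bar>B t\<bar> \<le> M" and bC: "\<bar>C t\<bar> \<le> M" if "t \<in> {0..1}" for t
    using M1 M2 M3 M4 M5 that unfolding M_def by fastforce+
  define K where "K t = A t * ((u t)^2 + u t * v t + (v t)^2) + B t * (u t + v t) + C t" for t
  define L where "L = 3*M^3 + 2*M^2 + M"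
  have KL: "\<bar>K t\<bar> \<le> L" if t: "t \<in> {0..1}" for t
  proof -
    have uu: "\<bar>u t\<bar> \<le> M" "\<bar>v t\<bar> \<le> M" using bu bv t by auto
    have "\<bar>(u t)^2 + u t * v t + (v t)^2\<bar> \<le> \<bar>u t\<bar>^2 + \<bar>u t\<bar> * \<bar>v t\<bar> + \<bar>v t\<bar>^2"
      using abs3[of "(u t)^2" "u t * v t" "(v t)^2"] by (simp add: abs_mult power2_abs)
    also have "\<dots> \<le> M^2 + M * M + M^2"
      using uu by (intro add_mono mult_mono power_mono) auto
    finally have q: "\<bar>(u t)^2 + u t * v t + (v t)^2\<bar> \<le> 3 * M^2" by (simp add: power2_eq_square)
    have l: "\<bar>u t + v t\<bar> \<le> 2 * M" using uu by linarith
    have "\<bar>K t\<bar> \<le> \<bar>A t\<bar> * \<bar>(u t)^2 + u t * v t + (v t)^2\<bar> + \<bar>B t\<bar> * \<bar>u t + v t\<bar> + \<bar>C t\<bar>"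
      unfolding K_def using abs3[of "A t * ((u t)^2 + u t * v t + (v t)^2)" "B t * (u t + v t)" "C t"] by (simp add: abs_mult)
    also have "\<dots> \<le> M * (3 * M^2) + M * (2 * M) + M"
      using q l bA bB bC t M0 by (intro add_mono mult_mono) auto
    finally show ?thesis unfolding L_def by (simp add: power3_eq_cube power2_eq_square algebra_simps)
  qed
  define w where "w t = (u t - v t)^2" for t
  have dw: "(w has_real_derivative 2 * K t * w t) (at t within {0..1})" if t: "t \<in> {0..1}" for t
  proof -
    have "(w has_real_derivative 2 * (u t - v t) * ((A t * (u t)^3 + B t * (u t)^2 + C t * u t) - (A t * (v t)^3 + B t * (v t)^2 + C t * v t))) (at t within {0..1})"
      unfolding w_def using sol_deriv[OF u t] sol_deriv[OF v t]
      by (auto intro!: derivative_eq_intros)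
    moreover have "2 * (u t - v t) * ((A t * (u t)^3 + B t * (u t)^2 + C t * u t) - (A t * (v t)^3 + B t * (v t)^2 + C t * v t)) = 2 * K t * w t"
      unfolding K_def w_def by (simp add: power2_eq_square power3_eq_cube algebra_simps)
    ultimately show ?thesis by simp
  qed
  have w0: "w t0 = 0" unfolding w_def using eq by simp
  have wnn: "w t \<ge> 0" for t unfolding w_def by simp
  have fwd: "w t = 0" if t: "t \<in> {t0<..1}" for t
  proof -
    define z where "z s = w s * exp (- (2 * L * s))" for s
    have dz: "(z has_real_derivative (2 * (K s - L) * w s * exp (- (2 * L * s)))) (at s within {0..1})"
      if "s \<in> {t0..t}" for s
    proof -
      have s01: "s \<in> {0..1}" using that t t0 by auto
      have "(z has_real_derivative (2 * K s * w s * exp (- (2 * L * s)) + w s * (exp (- (2 * L * s)) * (- (2 * L))))) (at s within {0..1})"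
        unfolding z_def using dw[OF s01]
        by (auto intro!: derivative_eq_intros)
      then show ?thesis by (simp add: algebra_simps)
    qed
    obtain \<xi> where \<xi>: "\<xi> \<in> {t0<..<t}" "z t - z t0 = (2 * (K \<xi> - L) * w \<xi> * exp (- (2 * L * \<xi>))) * (t - t0)"
      using mvt_within[of t0 t "{0..1}" z, OF _ _ dz] t t0 by auto
    have "K \<xi> - L \<le> 0" using KL[of \<xi>] \<xi> t t0 by auto
    then have "(2 * (K \<xi> - L) * w \<xi> * exp (- (2 * L * \<xi>))) * (t - t0) \<le> 0"
    proof -
      have "2 * (K \<xi> - L) * w \<xi> \<le> 0" using \<open>K \<xi> - L \<le> 0\<close> wnn[of \<xi>]
        by (simp add: mult_nonpos_nonneg)
      then have "2 * (K \<xi> - L) * w \<xi> * exp (- (2 * L * \<xi>)) \<le> 0"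
        by (simp add: mult_nonpos_nonneg)
      then show ?thesis using \<xi> by (simp add: mult_nonpos_nonneg)
    qed
    then have "z t \<le> 0" using \<xi> w0 unfolding z_def by simp
    then have "w t \<le> 0" unfolding z_def by (simp add: mult_le_0_iff)
    then show ?thesis using wnn[of t] by simp
  qed
  have bwd: "w t = 0" if t: "t \<in> {0..<t0}" for t
  proof -
    define z where "z s = w s * exp (2 * L * s)" for s
    have dz: "(z has_real_derivative (2 * (K s + L) * w s * exp (2 * L * s))) (at s within {0..1})"
      if "s \<in> {t..t0}" for s
    proof -
      have s01: "s \<in> {0..1}" using that t t0 by auto
      have "(z has_real_derivative (2 * K s * w s * exp (2 * L * s) + w s * (exp (2 * L * s) * (2 * L)))) (at s within {0..1})"
        unfolding z_def using dw[OF s01]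
        by (auto intro!: derivative_eq_intros)
      then show ?thesis by (simp add: algebra_simps)
    qed
    obtain \<xi> where \<xi>: "\<xi> \<in> {t<..<t0}" "z t0 - z t = (2 * (K \<xi> + L) * w \<xi> * exp (2 * L * \<xi>)) * (t0 - t)"
      using mvt_within[of t t0 "{0..1}" z, OF _ _ dz] t t0 by auto
    have "K \<xi> + L \<ge> 0" using KL[of \<xi>] \<xi> t t0 by auto
    then have "(2 * (K \<xi> + L) * w \<xi> * exp (2 * L * \<xi>)) * (t0 - t) \<ge> 0"
      using wnn[of \<xi>] \<xi> by auto
    then have "z t \<le> 0" using \<xi> w0 unfolding z_def by simp
    then have "w t \<le> 0" unfolding z_def by (simp add: mult_le_0_iff)
    then show ?thesis using wnn[of t] by simp
  qed
  show ?thesis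
  proof
    fix t :: real assume t: "t \<in> {0..1}"
    have "w t = 0"
    proof (cases "t = t0")
      case True then show ?thesis using w0 by simp
    next
      case False then show ?thesis using fwd bwd t t0 by (cases "t < t0") auto
    qed
    then show "u t = v t" unfolding w_def by simp
  qed
qed

lemma barrier_fwd:
  fixes f f' :: "real \<Rightarrow> real"
  assumes d: "\<And>t. t \<in> {0..1} \<Longrightarrow> (f has_real_derivative f' t) (at t within {0..1})"
    and z: "\<And>t. t \<in> {0..1} \<Longrightarrow> f t = 0 \<Longrightarrow> f' t > 0"
    and a: "a \<in> {0..1}" and fa: "f a \<ge> 0"
  shows "\<forall>t\<in>{a<..1}. f t > 0"
proof (rule ccontr)
  assume "\<not> ?thesis"
  then obtain t1 where t1: "t1 \<in> {a<..1}" "f t1 \<le> 0" by auto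
  have cf: "continuous_on {0..1} f" by (rule DERIV_continuous_on[OF d])
  obtain a' where a': "a \<le> a'" "a' < t1" "f a' > 0"
  proof (cases "f a > 0")
    case True then show ?thesis using that[of a] t1 by auto
  next
    case False
    then have fa0: "f a = 0" using fa by auto
    then have "f' a > 0" using z a by auto
    from has_real_derivative_pos_inc_right[OF d[OF a] this] obtain d where
      "d > 0" and hd: "\<forall>h>0. a + h \<in> {0..1} \<longrightarrow> h < d \<longrightarrow> f a < f (a + h)" by auto
    define h where "h = min d (t1 - a) / 2"
    have h: "h > 0" "a + h \<in> {0..1}" "h < d" "a + h < t1" using \<open>d > 0\<close> t1 a unfolding h_def by (auto simp: min_def field_simps)
    then have "f (a + h) > 0" using hd fa0 by auto
    then show ?thesis using that[of "a + h"] h by auto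
  qed
  define K where "K = {a'..t1} \<inter> f -` {..0}"
  have sub: "{a'..t1} \<subseteq> {0..1}" using a a' t1 by auto
  have "closed K" unfolding K_def
    by (rule continuous_closed_preimage[OF continuous_on_subset[OF cf sub]]) auto
  moreover have "t1 \<in> K" unfolding K_def using t1 a' by auto
  moreover have bb: "bdd_below K" unfolding K_def by (rule bdd_belowI[of _ a']) auto
  ultimately have mK: "Inf K \<in> K" using closed_contains_Inf by blast
  define m where "m = Inf K"
  have mK': "m \<in> K" using mK m_def by simp
  have mlow: "\<And>\<tau>. \<tau> \<in> K \<Longrightarrow> m \<le> \<tau>" unfolding m_def using bb by (simp add: cInf_lower)
  have m1: "a' \<le> m" "m \<le> t1" "f m \<le> 0" using mK' unfolding K_def by auto
  have "continuous_on {a'..m} f" using continuous_on_subset[OF cf] m1 sub by auto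
  from IVT2'[of f m 0 a', OF m1(3) _ m1(1) this] a' obtain \<tau> where
    \<tau>: "a' \<le> \<tau>" "\<tau> \<le> m" "f \<tau> = 0" by auto
  then have "\<tau> \<in> K" unfolding K_def using m1 by auto
  then have "\<tau> = m" using mlow[OF \<open>\<tau> \<in> K\<close>] \<tau>(2) by linarith
  then have fm: "f m = 0" using \<tau> by simp
  then have am: "a' < m" using a' m1 by (cases "a' = m") auto
  have m01: "m \<in> {0..1}" using m1 sub a' by auto
  have "f' m > 0" using z[OF m01 fm] .
  from has_real_derivative_pos_inc_left[OF d[OF m01] this] obtain d where
    "d > 0" and hd: "\<forall>h>0. m - h \<in> {0..1} \<longrightarrow> h < d \<longrightarrow> f (m - h) < f m" by auto
  define h where "h = min d (m - a') / 2"
  have h: "h > 0" "m - h \<in> {0..1}" "h < d" "a' < m - h" using \<open>d > 0\<close> am m01 a' a unfolding h_def by (auto simp: min_def field_simps)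
  then have "f (m - h) < 0" using hd fm by auto
  then have "m - h \<in> K" unfolding K_def using h m1 by auto
  then have "m \<le> m - h" by (rule mlow)
  then show False using h(1) by linarith
qed

lemma barrier_bwd:
  fixes f f' :: "real \<Rightarrow> real"
  assumes d: "\<And>t. t \<in> {0..1} \<Longrightarrow> (f has_real_derivative f' t) (at t within {0..1})"
    and z: "\<And>t. t \<in> {0..1} \<Longrightarrow> f t = 0 \<Longrightarrow> f' t > 0"
    and a: "a \<in> {0..1}" and fa: "f a \<le> 0"
  shows "\<forall>t\<in>{0..<a}. f t < 0"
proof (rule ccontr)
  assume "\<not> ?thesis"
  then obtain t1 where t1: "t1 \<in> {0..<a}" "f t1 \<ge> 0" by auto
  have cf: "continuous_on {0..1} f" by (rule DERIV_continuous_on[OF d])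
  obtain a' where a': "a' \<le> a" "t1 < a'" "f a' < 0"
  proof (cases "f a < 0")
    case True then show ?thesis using that[of a] t1 by auto
  next
    case False
    then have fa0: "f a = 0" using fa by auto
    then have "f' a > 0" using z a by auto
    from has_real_derivative_pos_inc_left[OF d[OF a] this] obtain d where
      "d > 0" and hd: "\<forall>h>0. a - h \<in> {0..1} \<longrightarrow> h < d \<longrightarrow> f (a - h) < f a" by auto
    define h where "h = min d (a - t1) / 2"
    have h: "h > 0" "a - h \<in> {0..1}" "h < d" "t1 < a - h" using \<open>d > 0\<close> t1 a unfolding h_def by (auto simp: min_def field_simps)
    then have "f (a - h) < 0" using hd fa0 by auto
    then show ?thesis using that[of "a - h"] h by auto
  qed
  define K where "K = {t1..a'} \<inter> f -` {0..}"
  have sub: "{t1..a'} \<subseteq> {0..1}" using a a' t1 by auto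
  have "closed K" unfolding K_def
    by (rule continuous_closed_preimage[OF continuous_on_subset[OF cf sub]]) auto
  moreover have "t1 \<in> K" unfolding K_def using t1 a' by auto
  moreover have bb: "bdd_above K" unfolding K_def by (rule bdd_aboveI[of _ a']) auto
  ultimately have mK: "Sup K \<in> K" using closed_contains_Sup by blast
  define m where "m = Sup K"
  have mK': "m \<in> K" using mK m_def by simp
  have mup: "\<And>\<tau>. \<tau> \<in> K \<Longrightarrow> \<tau> \<le> m" unfolding m_def using bb by (simp add: cSup_upper)
  have m1: "t1 \<le> m" "m \<le> a'" "f m \<ge> 0" using mK' unfolding K_def by auto
  have "continuous_on {m..a'} f" using continuous_on_subset[OF cf] m1 sub by auto
  from IVT2'[of f a' 0 m, OF _ m1(3) m1(2) this] a' obtain \<tau> where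
    \<tau>: "m \<le> \<tau>" "\<tau> \<le> a'" "f \<tau> = 0" by auto
  then have "\<tau> \<in> K" unfolding K_def using m1 by auto
  then have "\<tau> = m" using mup[OF \<open>\<tau> \<in> K\<close>] \<tau>(1) by linarith
  then have fm: "f m = 0" using \<tau> by simp
  then have am: "m < a'" using a' m1 by (cases "a' = m") auto
  have m01: "m \<in> {0..1}" using m1 sub a' by auto
  have "f' m > 0" using z[OF m01 fm] .
  from has_real_derivative_pos_inc_right[OF d[OF m01] this] obtain d where
    "d > 0" and hd: "\<forall>h>0. m + h \<in> {0..1} \<longrightarrow> h < d \<longrightarrow> f m < f (m + h)" by auto
  define h where "h = min d (a' - m) / 2"
  have h: "h > 0" "m + h \<in> {0..1}" "h < d" "m + h < a'" using \<open>d > 0\<close> am m01 a' a unfolding h_def by (auto simp: min_def field_simps)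
  then have "f (m + h) > 0" using hd fm by auto
  then have "m + h \<in> K" unfolding K_def using h m1 by auto
  then have "m + h \<le> m" by (rule mup)
  then show False using h(1) by linarith
qed

lemma barrier:
  fixes f f' :: "real \<Rightarrow> real"
  assumes d: "\<And>t. t \<in> {0..1} \<Longrightarrow> (f has_real_derivative f' t) (at t within {0..1})"
    and z: "\<And>t. t \<in> {0..1} \<Longrightarrow> f t = 0 \<Longrightarrow> f' t > 0"
    and per: "f 0 = f 1"
  shows "\<forall>t\<in>{0..1}. f t \<noteq> 0"
proof -
  have z01: "(0::real) \<in> {0..1}" and o01: "(1::real) \<in> {0..1}" by auto
  show ?thesis
proof (cases "f 0 \<ge> 0")
  case True
  have p: "\<forall>t\<in>{0<..1}. f t > 0"
    by (rule barrier_fwd[OF d z z01 True])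
  then have "f 1 > 0" by simp
  then have f0: "f 0 > 0" using per by simp
  show ?thesis
  proof
    fix t :: real assume t: "t \<in> {0..1}"
    show "f t \<noteq> 0"
    proof (cases "t = 0")
      case True then show ?thesis using f0 by simp
    next
      case False then have "t \<in> {0<..1}" using t by simp
      then show ?thesis using p by fastforce
    qed
  qed
next
  case False
  then have f1: "f 1 < 0" using per by simp
  then have "f 1 \<le> 0" by simp
  have p: "\<forall>t\<in>{0..<1}. f t < 0"
    by (rule barrier_bwd[OF d z o01 \<open>f 1 \<le> 0\<close>])
  show ?thesis
  proof
    fix t :: real assume t: "t \<in> {0..1}"
    show "f t \<noteq> 0"
    proof (cases "t = 1")
      case True then show ?thesis using f1 by simp
    next
      case False then have "t \<in> {0..<1}" using t by simp
      then show ?thesis using p by fastforce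
    qed
  qed
qed
qed

lemma strip_contra:
  fixes A B C u v :: "real \<Rightarrow> real" and a b c \<sigma> :: real
  assumes u: "abel_solution A B C u" and v: "abel_solution A B C v"
    and pu: "u 0 = u 1" and pv: "v 0 = v 1"
    and lt: "\<forall>t\<in>{0..1}. u t < v t"
    and sep: "\<And>z. z = 0 \<or> b*z^2 - a*z + c = 0 \<Longrightarrow> (\<forall>t\<in>{0..1}. z < u t) \<or> (\<forall>t\<in>{0..1}. v t < z)"
    and sig: "\<And>t y. t \<in> {0..1} \<Longrightarrow> \<sigma> * ((a*A t + b*B t)*y^2 + 2*(b*C t - c*A t)*y - (c*B t + a*C t)) > 0"
  shows False
proof -
  define G where "G y = b*y^2 - a*y + c" for y :: real
  have cu: "continuous_on {0..1} u" by (rule sol_cont[OF u])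
  have cv: "continuous_on {0..1} v" by (rule sol_cont[OF v])
  have ne: "{0..1::real} \<noteq> {}" by simp
  obtain tm where tm: "tm \<in> {0..1}" "\<forall>t\<in>{0..1}. u tm \<le> u t"
    using continuous_attains_inf[OF compact_Icc ne cu] by auto
  obtain tM where tM: "tM \<in> {0..1}" "\<forall>t\<in>{0..1}. v t \<le> v tM"
    using continuous_attains_sup[OF compact_Icc ne cv] by auto
  define m where "m = u tm"
  define M where "M = v tM"
  have inI: "u t \<in> {m..M} \<and> v t \<in> {m..M}" if "t \<in> {0..1}" for t
  proof -
    have "m \<le> u t" "v t \<le> M" "u t < v t" using tm tM lt that unfolding m_def M_def by auto
    then show ?thesis by auto
  qed
  have nz: "y \<noteq> 0 \<and> G y \<noteq> 0" if y: "y \<in> {m..M}" for y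
  proof (rule ccontr)
    assume "\<not> (y \<noteq> 0 \<and> G y \<noteq> 0)"
    then have "y = 0 \<or> b*y^2 - a*y + c = 0" unfolding G_def by auto
    from sep[OF this] show False
    proof
      assume "\<forall>t\<in>{0..1}. y < u t" then have "y < m" using tm(1) unfolding m_def by auto
      then show False using y by auto
    next
      assume "\<forall>t\<in>{0..1}. v t < y" then have "M < y" using tM(1) unfolding M_def by auto
      then show False using y by auto
    qed
  qed
  define h where "h y = 1 / (y * G y)" for y
  have ch: "continuous_on {m..M} h" unfolding h_def G_def
    by (intro continuous_intros) (use nz[unfolded G_def] in auto)
  define \<psi> where "\<psi> x = integral {m..x} h" for x
  have d\<psi>: "(\<psi> has_real_derivative h y) (at y within {m..M})" if "y \<in> {m..M}" for y
    unfolding \<psi>_def by (rule integral_has_real_derivative[OF ch that])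
  define R where "R t y = (A t * y^2 + B t * y + C t) / G y" for t y
  have dcomp: "((\<lambda>t. \<psi> (x t)) has_real_derivative R t (x t)) (at t within {0..1})"
    if x: "abel_solution A B C x" and xin: "\<forall>t\<in>{0..1}. x t \<in> {m..M}" and t: "t \<in> {0..1}" for x t
  proof -
    have sub: "x ` {0..1} \<subseteq> {m..M}" using xin by auto
    have xt: "x t \<in> {m..M}" using xin t by auto
    have d1: "(\<psi> has_real_derivative h (x t)) (at (x t) within (x ` {0..1}))"
      by (rule has_field_derivative_subset[OF d\<psi>[OF xt] sub])
    have "((\<psi> \<circ> x) has_real_derivative h (x t) * (A t * (x t)^3 + B t * (x t)^2 + C t * x t)) (at t within {0..1})"
      by (rule DERIV_image_chain[OF d1 sol_deriv[OF x t]])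
    moreover have "h (x t) * (A t * (x t)^3 + B t * (x t)^2 + C t * x t) = R t (x t)"
      using nz[OF xt] unfolding h_def R_def by (simp add: field_simps power2_eq_square power3_eq_cube)
    ultimately show ?thesis by (simp add: o_def)
  qed
  have uin: "\<forall>t\<in>{0..1}. u t \<in> {m..M}" and vin: "\<forall>t\<in>{0..1}. v t \<in> {m..M}" using inI by auto
  define W where "W t = \<psi> (v t) - \<psi> (u t)" for t
  have dW: "(W has_real_derivative R t (v t) - R t (u t)) (at t within {0..1})" if "t \<in> {0..1}" for t
    unfolding W_def by (rule DERIV_diff[OF dcomp[OF v vin that] dcomp[OF u uin that]])
  have sgn: "\<sigma> * (R t (v t) - R t (u t)) < 0" if t: "t \<in> {0..1}" for t
  proof -
    define Mq where "Mq y = (a*A t + b*B t)*y^2 + 2*(b*C t - c*A t)*y - (c*B t + a*C t)" for y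
    have dR: "(R t has_real_derivative - Mq y / (G y)^2) (at y within {m..M})" if "y \<in> {m..M}" for y
    proof -
      have Gy: "G y \<noteq> 0" using nz[OF that] by simp
      have "(R t has_real_derivative ((2*A t*y + B t) * G y - (A t*y^2 + B t*y + C t)*(2*b*y - a)) / (G y * G y)) (at y)"
        unfolding R_def
        apply (rule DERIV_divide)
          apply (auto intro!: derivative_eq_intros simp: G_def Gy[unfolded G_def])
        done
      moreover have "(2*A t*y + B t) * G y - (A t*y^2 + B t*y + C t)*(2*b*y - a) = - Mq y"
        unfolding G_def Mq_def by (simp add: algebra_simps power2_eq_square)
      ultimately show ?thesis by (simp add: power2_eq_square has_field_derivative_at_within)
    qed
    have uv: "u t < v t" using lt t by auto
    have sub: "{u t..v t} \<subseteq> {m..M}" using inI[OF t] by auto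
    obtain \<xi> where \<xi>: "\<xi> \<in> {u t<..<v t}" "R t (v t) - R t (u t) = - Mq \<xi> / (G \<xi>)^2 * (v t - u t)"
      using mvt_within[of "u t" "v t" "{m..M}" "R t" "\<lambda>y. - Mq y / (G y)^2", OF uv sub] dR sub by blast
    have \<xi>in: "\<xi> \<in> {m..M}" using sub \<xi>(1) by auto
    have s1: "\<sigma> * Mq \<xi> > 0" using sig[OF t] unfolding Mq_def .
    have s2: "(G \<xi>)^2 > 0" using nz[OF \<xi>in] by simp
    have "\<sigma> * (R t (v t) - R t (u t)) = - ((\<sigma> * Mq \<xi>) / (G \<xi>)^2 * (v t - u t))"
      using \<xi>(2) by simp
    moreover have "(\<sigma> * Mq \<xi>) / (G \<xi>)^2 * (v t - u t) > 0" using s1 s2 uv by simp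
    ultimately show ?thesis by linarith
  qed
  have z01: "(0::real) < 1" "{0..1::real} \<subseteq> {0..1}" by auto
  obtain \<xi> where \<xi>: "\<xi> \<in> {0<..<1}" "W 1 - W 0 = (R \<xi> (v \<xi>) - R \<xi> (u \<xi>)) * (1 - 0)"
    using mvt_within[of 0 1 "{0..1}" W "\<lambda>t. R t (v t) - R t (u t)", OF z01 dW] by blast
  have "W 1 = W 0" unfolding W_def using pu pv by simp
  then have "R \<xi> (v \<xi>) - R \<xi> (u \<xi>) = 0" using \<xi>(2) by simp
  then show False using sgn[of \<xi>] \<xi>(1) by simp
qed

theorem theorem5p2:
  fixes A B C :: "real \<Rightarrow> real" and a b c :: real
  assumes "smooth_on_unit A" and "smooth_on_unit B" and "smooth_on_unit C"
    and "\<exists>t\<in>{0..1}. a * A t + b * B t \<noteq> 0"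
    and "(\<forall>t\<in>{0..1}. a * A t + b * B t \<ge> 0) \<or> (\<forall>t\<in>{0..1}. a * A t + b * B t \<le> 0)"
    and "\<forall>t\<in>{0..1}. (b * C t - c * A t)^2 + (a * A t + b * B t) * (c * B t + a * C t) < 0"
  shows "finite (nonzero_periodic_orbits A B C) \<and> card (nonzero_periodic_orbits A B C) \<le> 4"
proof -
  define S where "S = nonzero_periodic_orbits A B C"
  have cA: "continuous_on {0..1} A" by (rule smooth_cont[OF assms(1)])
  have cB: "continuous_on {0..1} B" by (rule smooth_cont[OF assms(2)])
  have cC: "continuous_on {0..1} C" by (rule smooth_cont[OF assms(3)])
  have z01: "(0::real) \<in> {0..1}" and o01: "(1::real) \<in> {0..1}" by auto
  define \<alpha> where "\<alpha> t = a * A t + b * B t" for t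
  have E: "(b * C t - c * A t)^2 + \<alpha> t * (c * B t + a * C t) < 0" if "t \<in> {0..1}" for t
    using assms(6) that unfolding \<alpha>_def by blast
  have anz: "\<alpha> t \<noteq> 0" if t: "t \<in> {0..1}" for t
  proof
    assume "\<alpha> t = 0"
    then have "(b * C t - c * A t)^2 < 0" using E[OF t] by simp
    then show False by simp
  qed
  obtain \<sigma> :: real where sa: "\<And>t. t \<in> {0..1} \<Longrightarrow> \<sigma> * \<alpha> t > 0"
  proof (cases "\<forall>t\<in>{0..1}. \<alpha> t \<ge> 0")
    case True
    have "1 * \<alpha> t > 0" if "t \<in> {0..1}" for t
      using True anz[OF that] that by (simp add: order_less_le)
    then show ?thesis by (rule that)
  next
    case False
    then have le: "\<forall>t\<in>{0..1}. \<alpha> t \<le> 0" using assms(5) unfolding \<alpha>_def by auto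
    have "(-1) * \<alpha> t > 0" if "t \<in> {0..1}" for t
      using le anz[OF that] that by (simp add: order_less_le)
    then show ?thesis by (rule that)
  qed
  have sig: "\<sigma> * ((a*A t + b*B t)*y^2 + 2*(b*C t - c*A t)*y - (c*B t + a*C t)) > 0"
    if t: "t \<in> {0..1}" for t y
  proof -
    define Mq where "Mq = (a*A t + b*B t)*y^2 + 2*(b*C t - c*A t)*y - (c*B t + a*C t)"
    have "\<alpha> t * Mq = (\<alpha> t * y + (b*C t - c*A t))^2 - ((b * C t - c * A t)^2 + \<alpha> t * (c * B t + a * C t))"
      unfolding Mq_def \<alpha>_def by (simp add: algebra_simps power2_eq_square)
    moreover have "(\<alpha> t * y + (b*C t - c*A t))^2 \<ge> 0" by simp
    ultimately have p1: "\<alpha> t * Mq > 0" using E[OF t] by linarith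
    have p2: "\<sigma> * \<alpha> t > 0" by (rule sa[OF t])
    have eqn: "(\<sigma> * Mq) * (\<sigma> * \<alpha> t) = \<sigma>^2 * (\<alpha> t * Mq)" by (simp add: algebra_simps power2_eq_square)
    have "\<sigma> \<noteq> 0" using p2 by auto
    then have "\<sigma>^2 > 0" by simp
    then have "(\<sigma> * Mq) * (\<sigma> * \<alpha> t) > 0" unfolding eqn using p1 by (rule mult_pos_pos)
    then have "\<sigma> * Mq > 0" using p2 by (simp add: zero_less_mult_iff)
    then show ?thesis unfolding Mq_def .
  qed
  have abc: "\<not> (a = 0 \<and> b = 0 \<and> c = 0)"
  proof
    assume "a = 0 \<and> b = 0 \<and> c = 0"
    then show False using E[OF z01] unfolding \<alpha>_def by simp
  qed
  obtain r1 r2 where roots: "\<And>z. b*z^2 - a*z + c = 0 \<Longrightarrow> z = r1 \<or> z = r2"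
  proof (cases "\<exists>r. b*r^2 - a*r + c = 0")
    case False then show ?thesis using that[of 0 0] by auto
  next
    case True
    then obtain r where r: "b*r^2 - a*r + c = 0" by auto
    show ?thesis
    proof (cases "b = 0")
      case False
      show ?thesis
      proof (rule that[of r "a/b - r"])
        fix z assume z: "b*z^2 - a*z + c = 0"
        have "(z - r) * (b*(z + r) - a) = (b*z^2 - a*z + c) - (b*r^2 - a*r + c)"
          by (simp add: algebra_simps power2_eq_square)
        then have "(z - r) * (b*(z + r) - a) = 0" using z r by simp
        then have "z = r \<or> b*(z+r) = a" by auto
        then show "z = r \<or> z = a/b - r" using False by (auto simp: field_simps)
      qed
    next
      case True
      show ?thesis
      proof (rule that[of r r])
        fix z assume z: "b*z^2 - a*z + c = 0"
        have "a * (z - r) = 0" using z r True by (simp add: algebra_simps)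
        moreover have "a \<noteq> 0" using r True abc by auto
        ultimately show "z = r \<or> z = r" by simp
      qed
    qed
  qed
  define Z where "Z = {z. z = 0 \<or> b*z^2 - a*z + c = 0}"
  have ZS: "Z \<subseteq> {0, r1, r2}" unfolding Z_def using roots by auto
  have finZ: "finite Z" using finite_subset[OF ZS] by simp
  have "card {0::real, r1, r2} \<le> 3" by (auto simp: card_insert_if)
  then have cardZ: "card Z \<le> 3" using card_mono[OF _ ZS] by simp
  have zero_sol: "abel_solution A B C (\<lambda>t. 0)" unfolding abel_solution_def by simp
  have Smem: "x \<in> S \<longleftrightarrow> (\<forall>t. t \<notin> {0..1} \<longrightarrow> x t = 0) \<and> abel_solution A B C x \<and> x 0 = x 1 \<and> (\<exists>t\<in>{0..1}. x t \<noteq> 0)" for x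
    unfolding S_def nonzero_periodic_orbits_def by simp
  have nz0: "x t \<noteq> 0" if x: "x \<in> S" and t: "t \<in> {0..1}" for x t
  proof
    assume x0: "x t = 0"
    have xsol: "abel_solution A B C x" using x Smem by blast
    have "\<forall>s\<in>{0..1}. x s = 0" using abel_uniq[OF xsol zero_sol cA cB cC t] x0 by simp
    then show False using Smem x by auto
  qed
  have nzr: "b*(x t)^2 - a*(x t) + c \<noteq> 0" if x: "x \<in> S" and t: "t \<in> {0..1}" for x t
  proof
    assume g0: "b*(x t)^2 - a*(x t) + c = 0"
    define \<rho> where "\<rho> = x t"
    have \<rho>0: "\<rho> \<noteq> 0" using nz0[OF x t] unfolding \<rho>_def .
    have g\<rho>: "b*\<rho>^2 - a*\<rho> + c = 0" using g0 unfolding \<rho>_def .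
    have xsol: "abel_solution A B C x" using x Smem by blast
    have per: "x 0 = x 1" using x Smem by blast
    have key: "\<sigma> * (A s * \<rho>^2 + B s * \<rho> + C s) * (2*b*\<rho> - a) > 0" if s: "s \<in> {0..1}" for s
    proof -
      have "(A s * \<rho>^2 + B s * \<rho> + C s) * (2*b*\<rho> - a) = ((a*A s + b*B s)*\<rho>^2 + 2*(b*C s - c*A s)*\<rho> - (c*B s + a*C s)) + (2*A s*\<rho> + B s)*(b*\<rho>^2 - a*\<rho> + c)"
        by (simp add: algebra_simps power2_eq_square)
      then have "(A s * \<rho>^2 + B s * \<rho> + C s) * (2*b*\<rho> - a) = (a*A s + b*B s)*\<rho>^2 + 2*(b*C s - c*A s)*\<rho> - (c*B s + a*C s)"
        using g\<rho> by simp
      then show ?thesis using sig[OF s, of \<rho>] by (simp add: mult.assoc)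
    qed
    define s0 where "s0 = \<sigma> * (2*b*\<rho> - a) * \<rho>"
    have s0nz: "s0 \<noteq> 0" using key[OF t] \<rho>0 unfolding s0_def by auto
    define f where "f \<tau> = s0 * (x \<tau> - \<rho>)" for \<tau>
    define f' where "f' \<tau> = s0 * (A \<tau> * (x \<tau>)^3 + B \<tau> * (x \<tau>)^2 + C \<tau> * x \<tau>)" for \<tau>
    have df: "(f has_real_derivative f' \<tau>) (at \<tau> within {0..1})" if "\<tau> \<in> {0..1}" for \<tau>
      unfolding f_def f'_def using sol_deriv[OF xsol that] by (auto intro!: derivative_eq_intros)
    have fz: "f' \<tau> > 0" if \<tau>: "\<tau> \<in> {0..1}" and f0: "f \<tau> = 0" for \<tau>
    proof -
      have "x \<tau> = \<rho>" using f0 s0nz unfolding f_def by simp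
      then have "f' \<tau> = \<rho>^2 * (\<sigma> * (A \<tau> * \<rho>^2 + B \<tau> * \<rho> + C \<tau>) * (2*b*\<rho> - a))"
        unfolding f'_def s0_def by (simp add: algebra_simps power2_eq_square power3_eq_cube)
      moreover have "\<rho>^2 > 0" using \<rho>0 by simp
      ultimately show ?thesis using key[OF \<tau>] by simp
    qed
    have "f 0 = f 1" unfolding f_def using per by simp
    from barrier[OF df fz this] have "f t \<noteq> 0" using t by blast
    then show False unfolding f_def \<rho>_def by simp
  qed
  have notZ: "x t \<notin> Z" if "x \<in> S" "t \<in> {0..1}" for x t
    using nz0[OF that] nzr[OF that] unfolding Z_def by auto
  have side: "(\<forall>t\<in>{0..1}. z < x t) \<or> (\<forall>t\<in>{0..1}. x t < z)" if x: "x \<in> S" and z: "z \<in> Z" for x z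
  proof -
    have xsol: "abel_solution A B C x" using x Smem by blast
    have cx: "continuous_on {0..1} x" by (rule sol_cont[OF xsol])
    have nzd: "\<forall>t\<in>{0..1}. x t - z \<noteq> 0" using notZ[OF x] z by force
    have nzd2: "\<forall>t\<in>{0..1}. z - x t \<noteq> 0" using notZ[OF x] z by force
    have c1: "continuous_on {0..1} (\<lambda>t. x t - z)" by (intro continuous_intros cx)
    have c2: "continuous_on {0..1} (\<lambda>t. z - x t)" by (intro continuous_intros cx)
    have "x 0 \<noteq> z" using nzd z01 by force
    then consider "z < x 0" | "x 0 < z" by linarith
    then show ?thesis
    proof cases
      case 1
      have "\<forall>t\<in>{0..1}. z < x t"
      proof
        fix t :: real assume "t \<in> {0..1}"
        from const_sign[OF c1 nzd z01 this] 1 show "z < x t" by simp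
      qed
      then show ?thesis ..
    next
      case 2
      have "\<forall>t\<in>{0..1}. x t < z"
      proof
        fix t :: real assume "t \<in> {0..1}"
        from const_sign[OF c2 nzd2 z01 this] 2 show "x t < z" by simp
      qed
      then show ?thesis ..
    qed
  qed
  define L where "L x = card {z \<in> Z. z < x 0}" for x :: "real \<Rightarrow> real"
  have neq_pt: "u t \<noteq> v t" if u: "u \<in> S" and v: "v \<in> S" and uv: "u \<noteq> v" and t: "t \<in> {0..1}" for u v t
  proof
    assume eq: "u t = v t"
    have usol: "abel_solution A B C u" using u Smem by blast
    have vsol: "abel_solution A B C v" using v Smem by blast
    have in01: "\<forall>s\<in>{0..1}. u s = v s" by (rule abel_uniq[OF usol vsol cA cB cC t eq])
    have out: "\<forall>s. s \<notin> {0..1} \<longrightarrow> u s = v s" using Smem u v by auto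
    have "u = v"
    proof
      fix s show "u s = v s" using in01 out by (cases "s \<in> {0..1}") auto
    qed
    with uv show False ..
  qed
  have core: False if u: "u \<in> S" and v: "v \<in> S" and Luv: "L u = L v" and lt0: "u 0 < v 0" for u v
  proof -
    have uv: "u \<noteq> v" using lt0 by auto
    have usol: "abel_solution A B C u" using u Smem by blast
    have vsol: "abel_solution A B C v" using v Smem by blast
    have pu: "u 0 = u 1" using u Smem by blast
    have pv: "v 0 = v 1" using v Smem by blast
    have cd: "continuous_on {0..1} (\<lambda>t. v t - u t)"
      by (intro continuous_intros sol_cont[OF usol] sol_cont[OF vsol])
    have nzd: "\<forall>t\<in>{0..1}. v t - u t \<noteq> 0" using neq_pt[OF u v uv] by force
    have lt: "\<forall>t\<in>{0..1}. u t < v t"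
    proof
      fix t :: real assume "t \<in> {0..1}"
      from const_sign[OF cd nzd z01 this] lt0 show "u t < v t" by simp
    qed
    have sub: "{z \<in> Z. z < u 0} \<subseteq> {z \<in> Z. z < v 0}" using lt0 by auto
    have fin: "finite {z \<in> Z. z < v 0}" using finZ by simp
    have eqs: "{z \<in> Z. z < u 0} = {z \<in> Z. z < v 0}"
      using card_subset_eq[OF fin sub] Luv unfolding L_def by simp
    have sep: "(\<forall>t\<in>{0..1}. z < u t) \<or> (\<forall>t\<in>{0..1}. v t < z)" if zz: "z = 0 \<or> b*z^2 - a*z + c = 0" for z
    proof -
      have zZ: "z \<in> Z" using zz unfolding Z_def by simp
      show ?thesis
      proof (cases "\<forall>t\<in>{0..1}. z < u t")
        case True then show ?thesis ..
      next
        case False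
        then have "\<forall>t\<in>{0..1}. u t < z" using side[OF u zZ] by auto
        then have zu: "u 0 < z" using z01 by blast
        show ?thesis
        proof (cases "\<forall>t\<in>{0..1}. v t < z")
          case True then show ?thesis ..
        next
          case False
          then have "\<forall>t\<in>{0..1}. z < v t" using side[OF v zZ] by auto
          then have "z < v 0" using z01 by blast
          then have "z \<in> {z \<in> Z. z < u 0}" using eqs zZ by auto
          then show ?thesis using zu by auto
        qed
      qed
    qed
    show False by (rule strip_contra[OF usol vsol pu pv lt sep sig])
  qed
  have inj: "inj_on L S"
  proof (rule inj_onI)
    fix u v assume u: "u \<in> S" and v: "v \<in> S" and Luv: "L u = L v"
    show "u = v"
    proof (rule ccontr)
      assume "u \<noteq> v"
      then have "u 0 \<noteq> v 0" using neq_pt[OF u v _ z01] by blast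
      then consider "u 0 < v 0" | "v 0 < u 0" by linarith
      then show False
      proof cases
        case 1 then show False using core[OF u v Luv] by blast
      next
        case 2 then show False using core[OF v u Luv[symmetric]] by blast
      qed
    qed
  qed
  have img: "L ` S \<subseteq> {..3}"
  proof
    fix k assume "k \<in> L ` S"
    then obtain x where kx: "k = L x" by auto
    have "card {z \<in> Z. z < x 0} \<le> card Z" by (rule card_mono[OF finZ]) auto
    then show "k \<in> {..3}" using cardZ kx unfolding L_def by simp
  qed
  have finS: "finite S" by (rule finite_imageD[OF finite_subset[OF img finite_atMost] inj])
  have "card S = card (L ` S)" using card_image[OF inj] by simp
  also have "\<dots> \<le> card {..3::nat}" by (rule card_mono[OF finite_atMost img])
  also have "\<dots> = 4" by simp
  finally show ?thesis using finS unfolding S_def by simp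
qed

end
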